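(* Let $H \subset L$ be light-cone regular, $h \in H$ and $h_0 \in H_0$. If $h_0 \le h$ does not hold, then $f_h$ does not depend on the initial variable $f_{h_0}$. Equivalently, if $f_h$ depends on $f_{h_0}$, then $h_0 \le h$.
   Context: Let $R$ be a unique factorization domain with field of fractions $K$. Let $L$ be a finitely generated $\mathbb{Z}$-module, $v_1,\dots,v_N\in L$ distinct elements linearly independent over $\mathbb{Z}_{\ge 0}$ (i.e. $\sum_i a_i v_i=0$ with all $a_i\in\mathbb{Z}_{\ge0}$ forces all $a_i=0$), and $\Phi\in R[Y_1^{\pm1},\dots,Y_N^{\pm1}]$ a Laurent polynomial. Consider the equation $f_h=\Phi(f_{h+v_1},\dots,f_{h+v_N})$ ($h\in L$). Let $S=\{\sum_i a_iv_i : a_i\in\mathbb{Z}_{\ge0}\}$ and define the partial order $h_1\le h_2$ iff $h_1-h_2\in S$. A nonempty subset $H\subset L$ is light-cone regular if for every $h\in H$ the set $\{h'\in H: h'\le h\}$ is finite and $\{h'\in L: h'\ge h\}\subset H$; its initial boundary is $H_0=\{h\in H:\ h+v_i\notin H\text{ for some }i\}$. The $f_{h}$ ($h\in H_0$) are algebraically independent indeterminates over $K$ (initial variables), and for $h\in H\setminus H_0$ the value $f_h$ is defined recursively by the equation as an element of the rational function field $K(f_{h_0}: h_0\in H_0)$. "$f_h$ does not depend on $f_{h_0}$" means $f_h$ lies in the subfield generated over $K$ by the initial variables other than $f_{h_0}$. *)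

theory Defs
  imports Main "HOL-Computational_Algebra.Factorial_Ring" "HOL-Computational_Algebra.Fraction_Field"
    "HOL-Library.Poly_Mapping"
begin

fun nsmul :: "nat \<Rightarrow> 'a::monoid_add \<Rightarrow> 'a" where
  "nsmul 0 x = 0"
| "nsmul (Suc n) x = x + nsmul n x"

definition zsmul :: "int \<Rightarrow> 'a::ab_group_add \<Rightarrow> 'a" where
  "zsmul k x = (if 0 \<le> k then nsmul (nat k) x else - nsmul (nat (- k)) x)"

definition fin_gen_Zmod :: "'a::ab_group_add itself \<Rightarrow> bool" where
  "fin_gen_Zmod _ \<longleftrightarrow> (\<exists>G::'a set. finite G \<and> (\<forall>x. \<exists>c::'a \<Rightarrow> int. x = (\<Sum>g\<in>G. zsmul (c g) g)))"

definition nonneg_indep :: "nat \<Rightarrow> (nat \<Rightarrow> 'a::ab_group_add) \<Rightarrow> bool" where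
  "nonneg_indep N v \<longleftrightarrow> (\<forall>a::nat \<Rightarrow> nat. (\<Sum>i<N. nsmul (a i) (v i)) = 0 \<longrightarrow> (\<forall>i<N. a i = 0))"

definition cone :: "nat \<Rightarrow> (nat \<Rightarrow> 'a::ab_group_add) \<Rightarrow> 'a set" where
  "cone N v = {\<Sum>i<N. nsmul (a i) (v i) | a. True}"

definition cle :: "nat \<Rightarrow> (nat \<Rightarrow> 'a::ab_group_add) \<Rightarrow> 'a \<Rightarrow> 'a \<Rightarrow> bool" where
  "cle N v h1 h2 \<longleftrightarrow> h1 - h2 \<in> cone N v"

definition light_cone_regular :: "nat \<Rightarrow> (nat \<Rightarrow> 'a::ab_group_add) \<Rightarrow> 'a set \<Rightarrow> bool" where
  "light_cone_regular N v H \<longleftrightarrow> H \<noteq> {} \<and>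
     (\<forall>h\<in>H. finite {h'\<in>H. cle N v h' h} \<and> {h'. cle N v h h'} \<subseteq> H)"

definition init_boundary :: "nat \<Rightarrow> (nat \<Rightarrow> 'a::ab_group_add) \<Rightarrow> 'a set \<Rightarrow> 'a set" where
  "init_boundary N v H = {h\<in>H. \<exists>i<N. h + v i \<notin> H}"

definition field_hom :: "('a::field \<Rightarrow> 'b::field) \<Rightarrow> bool" where
  "field_hom \<iota> \<longleftrightarrow> \<iota> 0 = 0 \<and> \<iota> 1 = 1 \<and> (\<forall>x y. \<iota> (x + y) = \<iota> x + \<iota> y) \<and> (\<forall>x y. \<iota> (x * y) = \<iota> x * \<iota> y)"

definition is_subfield :: "'f::field set \<Rightarrow> bool" where
  "is_subfield F \<longleftrightarrow> 0 \<in> F \<and> 1 \<in> F \<and> (\<forall>x\<in>F. \<forall>y\<in>F. x + y \<in> F \<and> x * y \<in> F)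
      \<and> (\<forall>x\<in>F. - x \<in> F \<and> inverse x \<in> F)"

definition gen_subfield :: "'f::field set \<Rightarrow> 'f set" where
  "gen_subfield A = \<Inter>{F. is_subfield F \<and> A \<subseteq> F}"

definition mono_eval :: "('v \<Rightarrow>\<^sub>0 nat) \<Rightarrow> ('v \<Rightarrow> 'f::field) \<Rightarrow> 'f" where
  "mono_eval m x = (\<Prod>j\<in>Poly_Mapping.keys m. x j ^ Poly_Mapping.lookup m j)"

definition poly_eval :: "('k \<Rightarrow> 'f::field) \<Rightarrow> (('v \<Rightarrow>\<^sub>0 nat) \<Rightarrow>\<^sub>0 'k::zero) \<Rightarrow> ('v \<Rightarrow> 'f) \<Rightarrow> 'f" where
  "poly_eval \<iota> p x = (\<Sum>m\<in>Poly_Mapping.keys p. \<iota> (Poly_Mapping.lookup p m) * mono_eval m x)"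

definition alg_indep :: "('k::zero \<Rightarrow> 'f::field) \<Rightarrow> 'v set \<Rightarrow> ('v \<Rightarrow> 'f) \<Rightarrow> bool" where
  "alg_indep \<iota> J x \<longleftrightarrow> (\<forall>p::('v \<Rightarrow>\<^sub>0 nat) \<Rightarrow>\<^sub>0 'k. (\<forall>m\<in>Poly_Mapping.keys p. Poly_Mapping.keys m \<subseteq> J) \<longrightarrow> poly_eval \<iota> p x = 0 \<longrightarrow> p = 0)"

text \<open>Laurent polynomials over R in variables Y_0..Y_{N-1}, evaluated in a field via R \<rightarrow> K \<rightarrow> F\<close>
definition laurent_mono_eval :: "(nat \<Rightarrow>\<^sub>0 int) \<Rightarrow> (nat \<Rightarrow> 'f::field) \<Rightarrow> 'f" where
  "laurent_mono_eval m y = (\<Prod>i\<in>Poly_Mapping.keys m. y i powi Poly_Mapping.lookup m i)"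

definition laurent_eval :: "('r \<Rightarrow> 'f::field) \<Rightarrow> ((nat \<Rightarrow>\<^sub>0 int) \<Rightarrow>\<^sub>0 'r::zero) \<Rightarrow> (nat \<Rightarrow> 'f) \<Rightarrow> 'f" where
  "laurent_eval \<iota> \<Phi> y = (\<Sum>m\<in>Poly_Mapping.keys \<Phi>. \<iota> (Poly_Mapping.lookup \<Phi> m) * laurent_mono_eval m y)"

end

theory Submission
  imports Defs
begin

lemma nsmul_add: "nsmul (a + b) (x::'a::ab_group_add) = nsmul a x + nsmul b x"
  by (induction a) (auto simp: add_ac)

lemma nsmul_if: "nsmul (if P then 1 else 0) (x::'a::ab_group_add) = (if P then x else 0)"
  by auto

lemma cone_0: "(0::'a::ab_group_add) \<in> cone N v"
  unfolding cone_def by (rule CollectI, rule exI[of _ "\<lambda>_. 0"]) simp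

lemma cone_add: assumes "x \<in> cone N v" "y \<in> cone N v" shows "(x::'a::ab_group_add) + y \<in> cone N v"
proof -
  obtain a b where "x = (\<Sum>i<N. nsmul (a i) (v i))" "y = (\<Sum>i<N. nsmul (b i) (v i))"
    using assms unfolding cone_def by auto
  then have "x + y = (\<Sum>i<N. nsmul (a i + b i) (v i))"
    by (simp add: nsmul_add sum.distrib)
  then show ?thesis unfolding cone_def by (rule_tac CollectI, rule_tac exI[of _ "\<lambda>i. a i + b i"]) simp
qed

lemma cone_v: assumes "i < N" shows "(v i::'a::ab_group_add) \<in> cone N v"
proof -
  have "(\<Sum>j<N. nsmul (if j = i then 1 else 0) (v j)) = v i"
    using assms by (simp only: nsmul_if) simp
  then show ?thesis unfolding cone_def
    by (rule_tac CollectI, rule_tac exI[of _ "\<lambda>j. if j = i then 1 else 0"]) simp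
qed

lemma not_cle_step:
  assumes "nonneg_indep N v" "i < N"
  shows "\<not> cle N v h (h + (v i::'a::ab_group_add))"
proof
  assume "cle N v h (h + v i)"
  then obtain a where a: "- v i = (\<Sum>j<N. nsmul (a j) (v j))"
    unfolding cle_def cone_def by auto
  have e: "(\<Sum>j<N. nsmul (if j = i then 1 else 0) (v j)) = v i"
    using assms by (simp only: nsmul_if) simp
  have "(\<Sum>j<N. nsmul (a j + (if j = i then 1 else 0)) (v j)) = 0"
    by (simp only: nsmul_add sum.distrib e a[symmetric]) simp
  then have "\<forall>j<N. a j + (if j = i then 1 else 0) = 0"
    using assms(1) unfolding nonneg_indep_def by (rule_tac mp[OF spec[of _ "\<lambda>j. a j + (if j = i then 1 else 0)"]])
  then have "a i + (if i = i then 1 else 0) = 0" using assms(2) by blast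
  then show False by simp
qed

lemma cle_trans:
  assumes "cle N v x y" "cle N v y z" shows "cle N v (x::'a::ab_group_add) z"
proof -
  have "x - z = (x - y) + (y - z)" by simp
  then show ?thesis using assms cone_add[of "x - y" N v "y - z"] unfolding cle_def by simp
qed

lemma cle_refl: "cle N v (x::'a::ab_group_add) x"
  unfolding cle_def by (simp add: cone_0)

lemma gen_subfield_is: "is_subfield (gen_subfield (A::'f::field set))"
  unfolding gen_subfield_def is_subfield_def by auto

lemma gen_subfield_sup: "A \<subseteq> gen_subfield (A::'f::field set)"
  unfolding gen_subfield_def by auto

lemma subfield_sum:
  assumes "is_subfield F" "\<And>x. x \<in> S \<Longrightarrow> g x \<in> F"
  shows "sum g S \<in> (F::'f::field set)"
  using assms(2)
proof (induction S rule: infinite_finite_induct)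
  case (infinite A) then show ?case using assms(1) unfolding is_subfield_def by simp
next
  case empty then show ?case using assms(1) unfolding is_subfield_def by simp
next
  case (insert x A) then show ?case using assms(1) unfolding is_subfield_def by simp
qed

lemma subfield_prod:
  assumes "is_subfield F" "\<And>x. x \<in> S \<Longrightarrow> g x \<in> F"
  shows "prod g S \<in> (F::'f::field set)"
  using assms(2)
proof (induction S rule: infinite_finite_induct)
  case (infinite A) then show ?case using assms(1) unfolding is_subfield_def by simp
next
  case empty then show ?case using assms(1) unfolding is_subfield_def by simp
next
  case (insert x A) then show ?case using assms(1) unfolding is_subfield_def by simp
qed

lemma subfield_power:
  assumes "is_subfield F" "x \<in> F" shows "x ^ n \<in> (F::'f::field set)"
  using assms by (induction n) (auto simp: is_subfield_def)

lemma subfield_powi: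
  assumes "is_subfield F" "x \<in> F" shows "x powi n \<in> (F::'f::field set)"
proof -
  have "inverse x \<in> F" using assms unfolding is_subfield_def by auto
  then show ?thesis using assms subfield_power unfolding power_int_def by auto
qed

theorem lemma3p3:
  fixes N :: nat
    and v :: "nat \<Rightarrow> 'l::ab_group_add"
    and \<Phi> :: "(nat \<Rightarrow>\<^sub>0 int) \<Rightarrow>\<^sub>0 'r::{factorial_semiring, idom}"
    and \<iota> :: "'r fract \<Rightarrow> 'f::field"
    and H :: "'l set"
    and f :: "'l \<Rightarrow> 'f"
    and h h0 :: 'l
  assumes L_fg: "fin_gen_Zmod TYPE('l)"
    and v_distinct: "inj_on v {..<N}"
    and v_indep: "nonneg_indep N v"
    and \<Phi>_vars: "\<forall>m\<in>Poly_Mapping.keys \<Phi>. Poly_Mapping.keys m \<subseteq> {..<N}"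
    and \<iota>_hom: "field_hom \<iota>"
    and H_reg: "light_cone_regular N v H"
    and init_indep: "alg_indep \<iota> (init_boundary N v H) f"
    and F_gen: "gen_subfield (range \<iota> \<union> f ` init_boundary N v H) = UNIV"
    and f_eq: "\<forall>h\<in>H - init_boundary N v H.
                 f h = laurent_eval (\<lambda>r. \<iota> (Fract r 1)) \<Phi> (\<lambda>i. f (h + v i))"
    and h_in: "h \<in> H"
    and h0_in: "h0 \<in> init_boundary N v H"
    and not_le: "\<not> cle N v h0 h"
  shows "f h \<in> gen_subfield (range \<iota> \<union> f ` (init_boundary N v H - {h0}))"
proof -
  define G where "G = gen_subfield (range \<iota> \<union> f ` (init_boundary N v H - {h0}))"
  have G: "is_subfield G" unfolding G_def by (rule gen_subfield_is)
  have Gsup: "range \<iota> \<union> f ` (init_boundary N v H - {h0}) \<subseteq> G"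
    unfolding G_def by (rule gen_subfield_sup)
  define D where "D = (\<lambda>h. {h'\<in>H. cle N v h' h})"
  have main: "\<And>h. card (D h) = n \<Longrightarrow> h \<in> H \<Longrightarrow> \<not> cle N v h0 h \<Longrightarrow> f h \<in> G" for n
  proof (induction n rule: less_induct)
    case (less n h)
    show ?case
    proof (cases "h \<in> init_boundary N v H")
      case True
      then have "h \<noteq> h0" using less.prems(3) cle_refl by blast
      then show ?thesis using True Gsup by blast
    next
      case False
      have step: "h + v i \<in> H \<and> f (h + v i) \<in> G" if "i < N" for i
      proof -
        have hi: "h + v i \<in> H" using False less.prems(2) that unfolding init_boundary_def by auto
        have nl: "\<not> cle N v h0 (h + v i)"
        proof
          assume "cle N v h0 (h + v i)"
          moreover have "cle N v (h + v i) h" unfolding cle_def using cone_v[OF that] by simp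
          ultimately show False using cle_trans less.prems(3) by blast
        qed
        have fin: "finite (D h)" using H_reg less.prems(2) unfolding light_cone_regular_def D_def by auto
        have sub: "D (h + v i) \<subseteq> D h"
        proof
          fix x assume "x \<in> D (h + v i)"
          then have "x \<in> H" "cle N v x (h + v i)" unfolding D_def by auto
          moreover have "cle N v (h + v i) h" unfolding cle_def using cone_v[OF that] by simp
          ultimately show "x \<in> D h" unfolding D_def using cle_trans by blast
        qed
        have "h \<in> D h" "h \<notin> D (h + v i)" unfolding D_def
          using less.prems(2) cle_refl not_cle_step[OF v_indep that] by auto
        then have "D (h + v i) \<subset> D h" using sub by blast
        then have "card (D (h + v i)) < n" using fin less.prems(1) psubset_card_mono by blast
        then show ?thesis using less.IH hi nl by blast
      qed
      have "f h = laurent_eval (\<lambda>r. \<iota> (Fract r 1)) \<Phi> (\<lambda>i. f (h + v i))"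
        using f_eq False less.prems(2) by blast
      also have "\<dots> \<in> G"
        unfolding laurent_eval_def
      proof (rule subfield_sum[OF G])
        fix m assume m: "m \<in> Poly_Mapping.keys \<Phi>"
        have "\<iota> (Fract (Poly_Mapping.lookup \<Phi> m) 1) \<in> G" using Gsup by blast
        moreover have "laurent_mono_eval m (\<lambda>i. f (h + v i)) \<in> G"
          unfolding laurent_mono_eval_def
        proof (rule subfield_prod[OF G])
          fix i assume "i \<in> Poly_Mapping.keys m"
          then have "i < N" using m \<Phi>_vars by auto
          then show "f (h + v i) powi Poly_Mapping.lookup m i \<in> G"
            using step subfield_powi[OF G] by blast
        qed
        ultimately show "\<iota> (Fract (Poly_Mapping.lookup \<Phi> m) 1) * laurent_mono_eval m (\<lambda>i. f (h + v i)) \<in> G"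
          using G unfolding is_subfield_def by blast
      qed
      finally show ?thesis .
    qed
  qed
  show ?thesis using main h_in not_le unfolding G_def by blast
qed

end
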